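(* Let $D$ be a compact state space, let $A,B\subset D$ be disjoint nonempty closed sets with $A\cup B\subsetneq D$, and let $f:D\times D\to[0,\infty)$ satisfy the conditions listed in the context. Let $z^*$ be the $A$-$B$ competency of $f$, and assume that $L_{z^*}$ is $A$-$B$ connected. Then for every $z\in(0,z^*]$, every integer $n\ge N(z)$ and every $0\le i\le n$, \[ W^{n,i}_z=\pi_i\big(\mathbb{G}_n(L_z)\big). \] That is: (1) for every $\alpha\in W^{n,i}_z$ there exists a transition path $\vec\omega=(\omega_0,\dots,\omega_n)\in\mathbb{G}_n(L_z)$ with $\omega_i=\alpha$; and (2) for every $\vec\omega=(\omega_0,\dots,\omega_n)\in\mathbb{G}_n(L_z)$ one has $\omega_j\in W^{n,j}_z$ for all $0\le j\le n$.
   Context: Conditions on $f$: (i) $f(x,y)\ge 0$ for all $(x,y)\in D\times D$, and $f(x,y)=0$ whenever $x\in B$ (and $y\in D$) or whenever $y\in A$ (and $x\in D$); (ii) $f(x,x)=0$ for all $x\in D$; (iii) for every $x\in D\setminus(A\cup B)$, $\int_D f(x,y)\,dy=\int_D f(y,x)\,dy$; (iv) $f$ is bounded and piecewise continuous on $D\times D$. An $A$-$B$ transition path of length $n\in\mathbb{N}$ is a tuple $\vec\omega=(\omega_0,\omega_1,\dots,\omega_n)\in D^{n+1}$ with $\omega_0\in A$, $\omega_n\in B$ and $f(\omega_k,\omega_{k+1})>0$ for $0\le k\le n-1$; its edges are the pairs $(\omega_k,\omega_{k+1})$. For a set $\mathcal C\subset D\times D$, $\mathbb{G}_n(\mathcal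 C)$ denotes the set of all $A$-$B$ transition paths of length $n$ all of whose edges lie in $\mathcal C$, and $\mathcal C$ is called $A$-$B$ connected if $\bigcup_n\mathbb{G}_n(\mathcal C)\neq\emptyset$. For $z\ge0$ let $L_z=\{(x,y)\in D\times D: f(x,y)\ge z\}$. The $A$-$B$ competency of $f$ is $z^*=\sup\{z\ge0: L_z \text{ is } A\text{-}B\text{ connected}\}$. For $z>0$ and $C\subset D$ define $\Phi_z(C)=\bigcup_{x\in C}\{y\in D:(x,y)\in L_z\}$, $\Phi_z^0(C)=C$, $\Phi_z^m(C)=\Phi_z(\Phi_z^{m-1}(C))$. Let $N(z)=\min\{n\ge1:\Phi_z^n(A)\cap B\neq\emptyset\}$. For $n\ge N(z)$ define $W^{n,n}_z=\Phi^n_z(A)\cap B$ and recursively, for $0\le i<n$, $W^{n,i}_z=\{x\in\Phi^i_z(A):\Phi_z(\{x\})\cap W^{n,i+1}_z\neq\emptyset\}$. For $\vec\omega=(\omega_0,\dots,\omega_n)$, $\pi_i(\vec\omega)=\omega_i$ is the canonical projection. *)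

theory Defs
  imports "HOL-Analysis.Analysis"
begin

definition piecewise_continuous_on :: "('a::topological_space \<times> 'a) set \<Rightarrow> ('a \<Rightarrow> 'a \<Rightarrow> real) \<Rightarrow> bool" where
  "piecewise_continuous_on S f \<longleftrightarrow>
     (\<exists>P. finite P \<and> \<Union>P = S \<and> (\<forall>Q\<in>P. continuous_on Q (\<lambda>(x,y). f x y)))"

definition admissible_flux ::
  "'a::euclidean_space set \<Rightarrow> 'a set \<Rightarrow> 'a set \<Rightarrow> ('a \<Rightarrow> 'a \<Rightarrow> real) \<Rightarrow> bool" where
  "admissible_flux D A B f \<longleftrightarrow>
     (\<forall>x\<in>D. \<forall>y\<in>D. f x y \<ge> 0) \<and>
     (\<forall>x\<in>B. \<forall>y\<in>D. f x y = 0) \<and>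
     (\<forall>x\<in>D. \<forall>y\<in>A. f x y = 0) \<and>
     (\<forall>x\<in>D. f x x = 0) \<and>
     (\<forall>x\<in>D - (A \<union> B). (LINT y:D|lborel. f x y) = (LINT y:D|lborel. f y x)) \<and>
     bounded ((\<lambda>(x,y). f x y) ` (D \<times> D)) \<and>
     piecewise_continuous_on (D \<times> D) f"

definition trans_paths ::
  "'a set \<Rightarrow> 'a set \<Rightarrow> 'a set \<Rightarrow> ('a \<Rightarrow> 'a \<Rightarrow> real) \<Rightarrow> nat \<Rightarrow> ('a \<times> 'a) set \<Rightarrow> 'a list set" where
  "trans_paths D A B f n C =
     {\<omega>. length \<omega> = Suc n \<and> set \<omega> \<subseteq> D \<and> \<omega> ! 0 \<in> A \<and> \<omega> ! n \<in> B \<and>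
          (\<forall>k<n. f (\<omega> ! k) (\<omega> ! Suc k) > 0 \<and> (\<omega> ! k, \<omega> ! Suc k) \<in> C)}"

definition AB_connected ::
  "'a set \<Rightarrow> 'a set \<Rightarrow> 'a set \<Rightarrow> ('a \<Rightarrow> 'a \<Rightarrow> real) \<Rightarrow> ('a \<times> 'a) set \<Rightarrow> bool" where
  "AB_connected D A B f C \<longleftrightarrow> (\<exists>n. trans_paths D A B f n C \<noteq> {})"

definition level_set :: "'a set \<Rightarrow> ('a \<Rightarrow> 'a \<Rightarrow> real) \<Rightarrow> real \<Rightarrow> ('a \<times> 'a) set" where
  "level_set D f z = {(x,y). x \<in> D \<and> y \<in> D \<and> f x y \<ge> z}"

definition competency :: "'a set \<Rightarrow> 'a set \<Rightarrow> 'a set \<Rightarrow> ('a \<Rightarrow> 'a \<Rightarrow> real) \<Rightarrow> real" where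
  "competency D A B f = Sup {z. z \<ge> 0 \<and> AB_connected D A B f (level_set D f z)}"

definition Phi :: "'a set \<Rightarrow> ('a \<Rightarrow> 'a \<Rightarrow> real) \<Rightarrow> real \<Rightarrow> 'a set \<Rightarrow> 'a set" where
  "Phi D f z C = (\<Union>x\<in>C. {y\<in>D. (x,y) \<in> level_set D f z})"

definition Nz :: "'a set \<Rightarrow> 'a set \<Rightarrow> 'a set \<Rightarrow> ('a \<Rightarrow> 'a \<Rightarrow> real) \<Rightarrow> real \<Rightarrow> nat" where
  "Nz D A B f z = (LEAST n. n \<ge> 1 \<and> (Phi D f z ^^ n) A \<inter> B \<noteq> {})"

text \<open>Wdown D A B f z n k = W^{n,n-k}_z (downward recursion from i = n).\<close>
primrec Wdown :: "'a set \<Rightarrow> 'a set \<Rightarrow> 'a set \<Rightarrow> ('a \<Rightarrow> 'a \<Rightarrow> real) \<Rightarrow> real \<Rightarrow> nat \<Rightarrow> nat \<Rightarrow> 'a set" where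
  "Wdown D A B f z n 0 = (Phi D f z ^^ n) A \<inter> B"
| "Wdown D A B f z n (Suc k) =
     {x \<in> (Phi D f z ^^ (n - Suc k)) A. Phi D f z {x} \<inter> Wdown D A B f z n k \<noteq> {}}"

definition W :: "'a set \<Rightarrow> 'a set \<Rightarrow> 'a set \<Rightarrow> ('a \<Rightarrow> 'a \<Rightarrow> real) \<Rightarrow> real \<Rightarrow> nat \<Rightarrow> nat \<Rightarrow> 'a set" where
  "W D A B f z n i = Wdown D A B f z n (n - i)"

end

theory Submission
  imports Defs
begin

lemma reach_iff:
  "x \<in> (Phi D f z ^^ i) A \<longleftrightarrow>
   (\<exists>w. w 0 \<in> A \<and> w i = x \<and> (\<forall>k<i. (w k, w (Suc k)) \<in> level_set D f z))"
proof (induction i arbitrary: x)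
  case 0
  show ?case
  proof
    assume "x \<in> (Phi D f z ^^ 0) A" thus "\<exists>w. w 0 \<in> A \<and> w 0 = x \<and> (\<forall>k<0. (w k, w (Suc k)) \<in> level_set D f z)"
      by (intro exI[of _ "\<lambda>_. x"]) simp
  qed auto
next
  case (Suc i)
  show ?case
  proof
    assume "x \<in> (Phi D f z ^^ Suc i) A"
    then obtain y where y: "y \<in> (Phi D f z ^^ i) A" "(y,x) \<in> level_set D f z"
      by (auto simp: Phi_def)
    then obtain w where w: "w 0 \<in> A" "w i = y" "\<forall>k<i. (w k, w (Suc k)) \<in> level_set D f z"
      using Suc.IH by blast
    show "\<exists>w. w 0 \<in> A \<and> w (Suc i) = x \<and> (\<forall>k<Suc i. (w k, w (Suc k)) \<in> level_set D f z)"
      apply (intro exI[of _ "w(Suc i := x)"])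
      using w y by (auto simp: less_Suc_eq)
  next
    assume "\<exists>w. w 0 \<in> A \<and> w (Suc i) = x \<and> (\<forall>k<Suc i. (w k, w (Suc k)) \<in> level_set D f z)"
    then obtain w where w: "w 0 \<in> A" "w (Suc i) = x" "\<forall>k<Suc i. (w k, w (Suc k)) \<in> level_set D f z"
      by blast
    have "w i \<in> (Phi D f z ^^ i) A" using Suc.IH w by auto
    moreover have "(w i, x) \<in> level_set D f z" using w by auto
    ultimately show "x \<in> (Phi D f z ^^ Suc i) A"
      by (auto simp: Phi_def level_set_def)
  qed
qed

lemma wdown_iff:
  "k \<le> n \<Longrightarrow> x \<in> Wdown D A B f z n k \<longleftrightarrow>
   x \<in> (Phi D f z ^^ (n-k)) A \<and>
   (\<exists>v. v 0 = x \<and> v k \<in> B \<and> (\<forall>j<k. (v j, v (Suc j)) \<in> level_set D f z))"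
proof (induction k arbitrary: x)
  case 0
  show ?case
    by (auto intro: exI[of _ "\<lambda>_. x"])
next
  case (Suc k)
  have nk: "n - k = Suc (n - Suc k)" using Suc.prems by simp
  show ?case
  proof
    assume "x \<in> Wdown D A B f z n (Suc k)"
    then have x: "x \<in> (Phi D f z ^^ (n - Suc k)) A" and
      "\<exists>y. (x,y) \<in> level_set D f z \<and> y \<in> Wdown D A B f z n k"
      by (auto simp: Phi_def level_set_def)
    then obtain y where y: "(x,y) \<in> level_set D f z" "y \<in> Wdown D A B f z n k" by blast
    then obtain v where v: "v 0 = y" "v k \<in> B" "\<forall>j<k. (v j, v (Suc j)) \<in> level_set D f z"
      using Suc by auto
    show "x \<in> (Phi D f z ^^ (n - Suc k)) A \<and>
      (\<exists>v. v 0 = x \<and> v (Suc k) \<in> B \<and> (\<forall>j<Suc k. (v j, v (Suc j)) \<in> level_set D f z))"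
      apply (rule conjI[OF x])
      apply (rule exI[of _ "\<lambda>j. if j = 0 then x else v (j - 1)"])
      using v y by (auto simp: less_Suc_eq_0_disj)
  next
    assume H: "x \<in> (Phi D f z ^^ (n - Suc k)) A \<and>
      (\<exists>v. v 0 = x \<and> v (Suc k) \<in> B \<and> (\<forall>j<Suc k. (v j, v (Suc j)) \<in> level_set D f z))"
    then obtain v where v: "v 0 = x" "v (Suc k) \<in> B" "\<forall>j<Suc k. (v j, v (Suc j)) \<in> level_set D f z"
      by blast
    have e: "(x, v 1) \<in> level_set D f z" using v by auto
    have "v 1 \<in> (Phi D f z ^^ (n - k)) A"
      unfolding nk using H e by (auto simp: Phi_def level_set_def)
    moreover have "\<exists>u. u 0 = v 1 \<and> u k \<in> B \<and> (\<forall>j<k. (u j, u (Suc j)) \<in> level_set D f z)"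
      by (rule exI[of _ "\<lambda>j. v (Suc j)"]) (use v in auto)
    ultimately have "v 1 \<in> Wdown D A B f z n k" using Suc by auto
    then show "x \<in> Wdown D A B f z n (Suc k)"
      using H e by (auto simp: Phi_def level_set_def)
  qed
qed

theorem mainTheorem1:
  fixes D A B :: "'a::euclidean_space set" and f :: "'a \<Rightarrow> 'a \<Rightarrow> real"
  assumes "compact D"
    and "closed A" and "closed B" and "A \<noteq> {}" and "B \<noteq> {}" and "A \<inter> B = {}"
    and "A \<union> B \<subset> D"
    and "admissible_flux D A B f"
    and "AB_connected D A B f (level_set D f (competency D A B f))"
  shows "\<forall>z n i. 0 < z \<and> z \<le> competency D A B f \<and> Nz D A B f z \<le> n \<and> i \<le> n \<longrightarrow>
           W D A B f z n i = (\<lambda>\<omega>. \<omega> ! i) ` trans_paths D A B f n (level_set D f z)"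
proof (intro allI impI)
  fix z :: real and n i :: nat
  assume H: "0 < z \<and> z \<le> competency D A B f \<and> Nz D A B f z \<le> n \<and> i \<le> n"
  hence z: "0 < z" and i: "i \<le> n" by auto
  have AD: "A \<subseteq> D" using assms(7) by auto
  let ?L = "level_set D f z"
  have Lp: "(a,b) \<in> ?L \<Longrightarrow> a \<in> D \<and> b \<in> D \<and> f a b > 0" for a b
    using z by (auto simp: level_set_def)
  have nn: "n - (n - i) = i" using i by simp
  show "W D A B f z n i = (\<lambda>\<omega>. \<omega> ! i) ` trans_paths D A B f n ?L"
  proof
    show "W D A B f z n i \<subseteq> (\<lambda>\<omega>. \<omega> ! i) ` trans_paths D A B f n ?L"
    proof
      fix x assume "x \<in> W D A B f z n i"
      then have "x \<in> (Phi D f z ^^ i) A" and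
        "\<exists>v. v 0 = x \<and> v (n-i) \<in> B \<and> (\<forall>j<n-i. (v j, v (Suc j)) \<in> ?L)"
        using wdown_iff[of "n-i" n x D A B f z] nn by (auto simp: W_def)
      then obtain w v where w: "w 0 \<in> A" "w i = x" "\<forall>k<i. (w k, w (Suc k)) \<in> ?L"
        and v: "v 0 = x" "v (n-i) \<in> B" "\<forall>j<n-i. (v j, v (Suc j)) \<in> ?L"
        using reach_iff by metis
      define u where "u = (\<lambda>j. if j \<le> i then w j else v (j - i))"
      have ue: "(u k, u (Suc k)) \<in> ?L" if "k < n" for k
      proof (cases "k < i")
        case True thus ?thesis using w by (auto simp: u_def)
      next
        case False
        hence "u k = v (k - i)" "u (Suc k) = v (Suc (k - i))"
          using w v by (auto simp: u_def Suc_diff_le)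
        thus ?thesis using v that False by auto
      qed
      have uD: "u j \<in> D" if "j \<le> n" for j
      proof (cases j)
        case 0 thus ?thesis using w AD by (auto simp: u_def)
      next
        case (Suc m) thus ?thesis using ue[of m] that Lp by auto
      qed
      define \<omega> where "\<omega> = map u [0..<Suc n]"
      have nth: "j \<le> n \<Longrightarrow> \<omega> ! j = u j" for j
        unfolding \<omega>_def by (simp del: upt_Suc add: nth_map_upt)
      have "\<omega> \<in> trans_paths D A B f n ?L"
        unfolding trans_paths_def
      proof (intro CollectI conjI allI impI)
        show "length \<omega> = Suc n" by (simp add: \<omega>_def)
        show "set \<omega> \<subseteq> D" using uD by (auto simp: \<omega>_def)
        show "\<omega> ! 0 \<in> A" using nth[of 0] w by (simp add: u_def)
        show "\<omega> ! n \<in> B"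
        proof (cases "n = i")
          case True thus ?thesis using nth[of n] v w by (simp add: u_def)
        next
          case False thus ?thesis using nth[of n] v i by (simp add: u_def)
        qed
        fix k assume "k < n"
        thus "0 < f (\<omega> ! k) (\<omega> ! Suc k)" "(\<omega> ! k, \<omega> ! Suc k) \<in> ?L"
          using ue[of k] nth[of k] nth[of "Suc k"] Lp by auto
      qed
      moreover have "\<omega> ! i = x" using nth[of i] i w by (simp add: u_def)
      ultimately show "x \<in> (\<lambda>\<omega>. \<omega> ! i) ` trans_paths D A B f n ?L" by force
    qed
  next
    show "(\<lambda>\<omega>. \<omega> ! i) ` trans_paths D A B f n ?L \<subseteq> W D A B f z n i"
    proof
      fix x assume "x \<in> (\<lambda>\<omega>. \<omega> ! i) ` trans_paths D A B f n ?L"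
      then obtain \<omega> where om: "\<omega> ! 0 \<in> A" "\<omega> ! n \<in> B"
        "\<forall>k<n. (\<omega> ! k, \<omega> ! Suc k) \<in> ?L" and x: "x = \<omega> ! i"
        by (auto simp: trans_paths_def)
      have "x \<in> (Phi D f z ^^ i) A"
        unfolding reach_iff
        by (rule exI[of _ "\<lambda>k. \<omega> ! k"]) (use om x i in auto)
      moreover have "\<exists>v. v 0 = x \<and> v (n-i) \<in> B \<and> (\<forall>j<n-i. (v j, v (Suc j)) \<in> ?L)"
        by (rule exI[of _ "\<lambda>j. \<omega> ! (i + j)"]) (use om x i in auto)
      ultimately show "x \<in> W D A B f z n i"
        using wdown_iff[of "n-i" n x D A B f z] nn by (auto simp: W_def)
    qed
  qed
qed

end
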